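(* Fix an integer $b\ge2$ and $0<\alpha<1$. Let $C_\alpha=\tfrac{10}{3}\alpha^{-1}\log_2 10-\alpha^{-1}\log_2(1-2^{-\alpha})+2\alpha^{-1}-1$ and let $\ell_0\in\mathbb{N}$ satisfy $b^{\ell_0}>\max\{\frac{20}{b^{1-\alpha}-1},\,40C_\alpha b^{2C_\alpha(1-\alpha)}\}$. Put $\ell=b^{-\ell_0}$ and, for $i\in\{0,\dots,b^{\ell_0+3}-1\}$, $r_i=ib^{-\ell_0-3}$, $s_i=r_i+\ell$, and $g_i(x)=\overline{h}_\ell\big(x-\tfrac12(r_i+s_i-1)\big)$ (a $1$-periodic function). Then for all $x<y$ in $\mathbb{R}$ with $y-x<b^{-\ell_0-1}$ there exists $i\in\{0,\dots,b^{\ell_0+3}-1\}$ such that $$W^{\alpha,b}_{g_i}(y)-W^{\alpha,b}_{g_i}(x)\ge \tfrac{7}{10}\,b^{\alpha\ell_0-2(1-\alpha)}\,(y-x)^\alpha.$$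
   Context: For $0<\ell\le\tfrac12$, $h_\ell\colon[0,1)\to\mathbb{R}$ is defined by $h_\ell(x)=-\frac{x}{1-\ell}$ for $0\le x<\tfrac12(1-\ell)$, $h_\ell(x)=\frac{x}{\ell}-\frac{1}{2\ell}$ for $\tfrac12(1-\ell)\le x<\tfrac12(1+\ell)$, and $h_\ell(x)=\frac{1-x}{1-\ell}$ for $\tfrac12(1+\ell)\le x<1$; and $\overline{h}_\ell(x)=h_\ell(x-\lfloor x\rfloor)$ is its $1$-periodic extension to $\mathbb{R}$ (a continuous piecewise linear function with values in $[-\tfrac12,\tfrac12]$). For a $1$-periodic Lipschitz $g$, $W_g^{\alpha,b}(x)=\sum_{k=0}^\infty b^{-\alpha k}g(b^kx)$. *)

theory Defs
  imports "HOL-Analysis.Analysis"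
begin

definition h_fun :: "real \<Rightarrow> real \<Rightarrow> real" where
  "h_fun l x =
     (if x < (1 - l) / 2 then - x / (1 - l)
      else if x < (1 + l) / 2 then x / l - 1 / (2 * l)
      else (1 - x) / (1 - l))"

definition h_bar :: "real \<Rightarrow> real \<Rightarrow> real" where
  "h_bar l x = h_fun l (x - of_int \<lfloor>x\<rfloor>)"

definition W_fun :: "real \<Rightarrow> nat \<Rightarrow> (real \<Rightarrow> real) \<Rightarrow> real \<Rightarrow> real" where
  "W_fun \<alpha> b g x = (\<Sum>k. real b powr (- \<alpha> * real k) * g (real b ^ k * x))"

end

theory Submission
  imports Defs
begin


lemma h_fun_bound:
  assumes "0 < l" "l < 1" "0 \<le> f" "f < 1"
  shows "\<bar>h_fun l f\<bar> \<le> 1/2"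
  using assms by (auto simp: h_fun_def divide_simps split: if_splits)

lemma h_bar_bound:
  assumes "0 < l" "l < 1"
  shows "\<bar>h_bar l t\<bar> \<le> 1/2"
  unfolding h_bar_def
  by (rule h_fun_bound) (use assms in \<open>auto simp: floor_le_iff\<close>, linarith)

lemma G_mono:
  assumes "0 < l" "l < 1" "0 \<le> f1" "f1 \<le> f2" "f2 < 1"
  shows "h_fun l f1 + f1/(1-l) \<le> h_fun l f2 + f2/(1-l)"
  using assms by (auto simp: h_fun_def divide_simps split: if_splits; simp add: algebra_simps)+

lemma G_range:
  assumes "0 < l" "l < 1" "0 \<le> f" "f < 1"
  shows "0 \<le> h_fun l f + f/(1-l)" "h_fun l f + f/(1-l) \<le> 1/(1-l)"
  using assms by (auto simp: h_fun_def divide_simps split: if_splits; simp add: algebra_simps)+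

lemma F_mono:
  assumes "0 < l" "l < 1" "x \<le> y"
  shows "h_bar l x + x/(1-l) \<le> h_bar l y + y/(1-l)"
proof -
  define fx where "fx = x - of_int \<lfloor>x\<rfloor>"
  define fy where "fy = y - of_int \<lfloor>y\<rfloor>"
  have fx: "0 \<le> fx" "fx < 1" unfolding fx_def by linarith+
  have fy: "0 \<le> fy" "fy < 1" unfolding fy_def by linarith+
  have ex: "h_bar l x + x/(1-l) = (h_fun l fx + fx/(1-l)) + of_int \<lfloor>x\<rfloor>/(1-l)"
  proof -
    have "x/(1-l) = fx/(1-l) + of_int \<lfloor>x\<rfloor>/(1-l)" by (simp add: fx_def diff_divide_distrib)
    then show ?thesis by (simp add: h_bar_def fx_def[symmetric])
  qed
  have ey: "h_bar l y + y/(1-l) = (h_fun l fy + fy/(1-l)) + of_int \<lfloor>y\<rfloor>/(1-l)"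
  proof -
    have "y/(1-l) = fy/(1-l) + of_int \<lfloor>y\<rfloor>/(1-l)" by (simp add: fy_def diff_divide_distrib)
    then show ?thesis by (simp add: h_bar_def fy_def[symmetric])
  qed
  have fl: "\<lfloor>x\<rfloor> \<le> \<lfloor>y\<rfloor>" using assms(3) floor_mono by blast
  show ?thesis
  proof (cases "\<lfloor>x\<rfloor> = \<lfloor>y\<rfloor>")
    case True
    then have "fx \<le> fy" unfolding fx_def fy_def using assms by simp
    then show ?thesis unfolding ex ey using G_mono[OF assms(1,2) fx(1) _ fy(2)] True by simp
  next
    case False
    then have "of_int \<lfloor>x\<rfloor> + 1 \<le> (of_int \<lfloor>y\<rfloor>::real)" using fl by linarith
    then have "of_int \<lfloor>x\<rfloor>/(1-l) + 1/(1-l) \<le> of_int \<lfloor>y\<rfloor>/(1-l)"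
      using assms by (simp add: divide_simps)
    then show ?thesis unfolding ex ey using G_range[OF assms(1,2) fx] G_range[OF assms(1,2) fy] by linarith
  qed
qed

lemma h_bar_incr:
  assumes "0 < l" "l < 1" "x \<le> y"
  shows "h_bar l y - h_bar l x \<ge> - (y - x)/(1-l)"
  using F_mono[OF assms] by (simp add: diff_divide_distrib)

lemma h_bar_steep:
  assumes "0 < l" "l < 1" "0 \<le> \<theta>" "\<theta> < l"
  shows "h_bar l (of_int m + (1-l)/2 + \<theta>) = \<theta>/l - 1/2"
proof -
  have "\<lfloor>of_int m + (1-l)/2 + \<theta>\<rfloor> = m"
  proof (rule floor_unique)
    show "of_int m \<le> of_int m + (1-l)/2 + \<theta>" using assms by simp
    show "of_int m + (1-l)/2 + \<theta> < of_int m + 1" using assms by (simp add: field_simps)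
  qed
  then show ?thesis unfolding h_bar_def h_fun_def using assms
    by (auto simp: field_simps)
qed


lemma exists_scale:
  fixes B v :: real
  assumes "1 < B" "0 < v" "v < 1/B"
  shows "\<exists>k. 1/B^2 \<le> v * B^k \<and> v * B^k < 1/B"
proof -
  obtain n where n: "1/(B^2 * v) < B^n" using real_arch_pow[OF assms(1)] by blast
  have P: "1/B^2 \<le> v * B^n" using n assms by (simp add: field_simps)
  define k where "k = (LEAST k. 1/B^2 \<le> v * B^k)"
  have k1: "1/B^2 \<le> v * B^k" unfolding k_def by (rule LeastI[of _ n]) (rule P)
  have "v * B^k < 1/B"
  proof (cases k)
    case 0 then show ?thesis using assms by simp
  next
    case (Suc j)
    then have "\<not> 1/B^2 \<le> v * B^j" unfolding k_def by (metis Suc k_def lessI not_less_Least)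
    then have "v * B^j < 1/B^2" by simp
    then have "B * (v * B^j) < B * (1/B^2)" using assms by (intro mult_strict_left_mono) auto
    then show ?thesis using Suc assms by (simp add: power2_eq_square field_simps)
  qed
  with k1 show ?thesis by blast
qed

lemma rho_pow:
  fixes B :: real assumes "0 < B"
  shows "(B powr (-a))^j = B powr (-a * real j)"
  using assms by (simp add: powr_realpow[symmetric] powr_powr)

lemma pow_powr:
  fixes B :: real assumes "0 < B"
  shows "(B powr a)^j = B powr (a * real j)"
  using assms by (simp add: powr_realpow[symmetric] powr_powr)



theorem mainTheorem4:
  fixes b :: nat and \<alpha> :: real and l0 :: nat
  assumes hb: "b \<ge> 2"
    and halpha: "0 < \<alpha>" "\<alpha> < 1"
    and hl0: "let C = 10 / 3 / \<alpha> * log 2 10 - log 2 (1 - 2 powr (- \<alpha>)) / \<alpha> + 2 / \<alpha> - 1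
            in real b ^ l0 > max (20 / (real b powr (1 - \<alpha>) - 1))
                                   (40 * C * real b powr (2 * C * (1 - \<alpha>)))"
  shows "\<forall>x y :: real. x < y \<and> y - x < real b powr (- real l0 - 1) \<longrightarrow>
    (\<exists>i \<in> {0..<b ^ (l0 + 3)}.
       let l = real b powr (- real l0);
           r = real i * real b powr (- real l0 - 3);
           s = r + l;
           g = (\<lambda>t. h_bar l (t - (r + s - 1) / 2))
       in W_fun \<alpha> b g y - W_fun \<alpha> b g x
            \<ge> 7 / 10 * real b powr (\<alpha> * real l0 - 2 * (1 - \<alpha>)) * (y - x) powr \<alpha>)"
proof (intro allI impI)
  fix x y :: real
  assume xy: "x < y \<and> y - x < real b powr (- real l0 - 1)"
  define B where "B = real b"
  define C where "C = 10 / 3 / \<alpha> * log 2 10 - log 2 (1 - 2 powr (- \<alpha>)) / \<alpha> + 2 / \<alpha> - 1"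
  define w where "w = 1 - 2 powr (- \<alpha>)"
  define q where "q = B powr (1 - \<alpha>)"
  define \<rho> where "\<rho> = B powr (- \<alpha>)"
  define \<delta> where "\<delta> = y - x"
  define N where "N = l0"
  have B2: "2 \<le> B" using hb unfolding B_def by simp
  have B0: "0 < B" "1 < B" using B2 by auto
  have hN1: "20 / (q - 1) < B ^ N" and hN2: "40 * C * B powr (2 * C * (1 - \<alpha>)) < B ^ N"
    using hl0 unfolding Let_def C_def[symmetric] B_def[symmetric] q_def N_def by auto
  have q1: "1 < q" unfolding q_def using B0 halpha by (intro gr_one_powr) auto
  have \<rho>: "0 < \<rho>" "\<rho> < 1" unfolding \<rho>_def using B0 halpha by (auto intro: powr_less_one)
  have qrho: "\<rho> * B = q"
  proof -
    have "B powr (-\<alpha>) * B = B powr (-\<alpha>) * B powr 1" using B0 by simp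
    also have "\<dots> = B powr (-\<alpha> + 1)" by (rule powr_add[symmetric])
    finally show ?thesis unfolding \<rho>_def q_def by simp
  qed
  have w: "0 < w" "w < 1" unfolding w_def using halpha by (auto intro: powr_less_one)
  have wrho: "w \<le> 1 - \<rho>"
    unfolding w_def \<rho>_def using B2 halpha powr_mono2'[of "-\<alpha>" 2 B] by simp
  have log10: "3 \<le> log 2 10"
  proof -
    have "log 2 8 \<le> log 2 (10::real)" by simp
    moreover have "log 2 (8::real) = 3" using log_pow_cancel[of 2 3] by simp
    ultimately show ?thesis by linarith
  qed
  have logw: "log 2 w \<le> 0" using w by simp
  have C11: "11 \<le> C"
  proof -
    have "10/\<alpha> \<le> 10/3/\<alpha> * log 2 10" using log10 halpha by (simp add: field_simps)
    moreover have "0 \<le> - log 2 w / \<alpha>" using logw halpha by (simp add: divide_nonpos_pos)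
    moreover have "12 \<le> 12/\<alpha>" using halpha by (simp add: field_simps)
    ultimately show ?thesis unfolding C_def w_def[symmetric] by linarith
  qed
  have Bpow1: "1 \<le> B powr (2 * C * (1 - \<alpha>))"
    using powr_mono[of 0 "2 * C * (1 - \<alpha>)" B] B0 C11 halpha by simp
  have BN: "40 < B ^ N"
  proof -
    have "40 \<le> 40 * C * B powr (2 * C * (1 - \<alpha>))"
    proof -
      have "1 * 1 \<le> C * B powr (2 * C * (1 - \<alpha>))" using C11 Bpow1
        by (intro mult_mono) auto
      then show ?thesis by simp
    qed
    then show ?thesis using hN2 by linarith
  qed
  define l where "l = 1 / B ^ N"
  have l: "0 < l" "l < 1/40" unfolding l_def using BN by (auto simp: field_simps)
  have \<delta>: "0 < \<delta>" "\<delta> * B ^ (N+1) < 1"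
  proof -
    have "real b powr (- real l0 - 1) = 1 / B ^ (N+1)"
    proof -
      have "real b powr (- real l0 - 1) = B powr (- real (N+1))" unfolding B_def N_def by (rule arg_cong[of _ _ "\<lambda>e. real b powr e"]) simp
      also have "\<dots> = 1 / B ^ (N+1)" by (simp only: powr_minus powr_realpow[OF B0(1)]) (simp add: divide_inverse)
      finally show ?thesis .
    qed
    then have "\<delta> < 1 / B ^ (N+1)" using xy unfolding \<delta>_def by simp
    moreover have "0 < B ^ (N+1)" using B0 by simp
    ultimately show "\<delta> * B ^ (N+1) < 1" by (simp add: field_simps)
    show "0 < \<delta>" using xy unfolding \<delta>_def by simp
  qed
  obtain k where k: "1/B^2 \<le> (B^N * \<delta>) * B^k" "(B^N * \<delta>) * B^k < 1/B"
    using exists_scale[of B "B^N * \<delta>"] B0 \<delta> by (auto simp: field_simps)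
  define u where "u = (B^N * \<delta>) * B^k"
  have u: "1/B^2 \<le> u" "u < 1/B" using k unfolding u_def by auto
  define T where "T = nat \<lceil>2 * C\<rceil>"
  have T: "1 \<le> T" "real T - 1 \<le> 2 * C" "2 * C \<le> real T"
    unfolding T_def using C11 by linarith+
  define K where "K = k + T"
  have l_eq: "real b powr (- real l0) = l"
    unfolding l_def B_def[symmetric] N_def by (simp only: powr_minus powr_realpow[OF B0(1)]) (simp add: divide_inverse)
  define P where "P = B ^ (N + 3)"
  have P0: "0 < P" unfolding P_def using B0 by simp
  have r_eq: "real b powr (- real l0 - 3) = 1 / P"
  proof -
    have "real b powr (- real l0 - 3) = B powr (- real (N+3))" unfolding B_def N_def by (rule arg_cong[of _ _ "\<lambda>e. real b powr e"]) simp
    also have "\<dots> = 1 / P" unfolding P_def by (simp only: powr_minus powr_realpow[OF B0(1)]) (simp add: divide_inverse)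
    finally show ?thesis .
  qed
  define X where "X = B ^ k * x"
  define f where "f = X - of_int \<lfloor>X\<rfloor>"
  have f: "0 \<le> f" "f < 1" unfolding f_def by linarith+
  define n where "n = \<lfloor>f * P\<rfloor>"
  have n: "0 \<le> n" "real_of_int n \<le> f * P" "f * P < real_of_int n + 1" "real_of_int n < P"
    unfolding n_def using f P0 by (auto simp: mult_less_cancel_right2 intro: le_less_trans[of _ "f * P"])
  define i where "i = nat n"
  have i_real: "real i = real_of_int n" unfolding i_def using n by simp
  have i_lt: "i < b ^ (l0 + 3)"
  proof -
    have "real i < real (b ^ (l0 + 3))" using i_real n unfolding P_def B_def N_def by simp
    then show ?thesis by linarith
  qed
  define r where "r = real i * (1 / P)"
  define g where "g = (\<lambda>t. h_bar l (t - (r + (r + l) - 1) / 2))"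
  have key: "W_fun \<alpha> b g y - W_fun \<alpha> b g x \<ge> 7 / 10 * B powr (\<alpha> * real N - 2 * (1 - \<alpha>)) * \<delta> powr \<alpha>"
  proof -
    have gb: "\<And>t. \<bar>g t\<bar> \<le> 1/2" unfolding g_def using l by (intro h_bar_bound) auto
    have gi: "g t - g s \<ge> - (t - s)/(1-l)" if st: "s \<le> t" for s t
    proof -
      have "h_bar l (t - (r + (r + l) - 1) / 2) - h_bar l (s - (r + (r + l) - 1) / 2) \<ge> - ((t - (r + (r + l) - 1) / 2) - (s - (r + (r + l) - 1) / 2))/(1-l)"
        using l st by (intro h_bar_incr) auto
      then show ?thesis unfolding g_def by simp
    qed
    define a where "a j = \<rho>^j * (g (B^j * y) - g (B^j * x))" for j
    have Wz: "W_fun \<alpha> b g z = (\<Sum>j. \<rho>^j * g (B^j * z))" for z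
      unfolding W_fun_def B_def[symmetric] \<rho>_def by (simp add: rho_pow[OF B0(1)])
    have sumz: "summable (\<lambda>j. \<rho>^j * g (B^j * z))" for z
    proof (rule summable_comparison_test'[where g="\<lambda>j. \<rho>^j" and N=0])
      show "summable (\<lambda>j. \<rho>^j)" using \<rho> by (intro summable_geometric) auto
      fix j :: nat
      have "\<bar>g (B^j * z)\<bar> \<le> 1" using gb[of "B^j * z"] by simp
      then have "\<rho>^j * \<bar>g (B^j * z)\<bar> \<le> \<rho>^j * 1" using \<rho> by (intro mult_left_mono) auto
      then show "norm (\<rho>^j * g (B^j * z)) \<le> \<rho>^j" using \<rho> by (simp add: abs_mult)
    qed
    have Wd: "W_fun \<alpha> b g y - W_fun \<alpha> b g x = suminf a"
      unfolding Wz a_def by (simp add: suminf_diff[OF sumz sumz] right_diff_distrib)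
    have suma: "summable a" unfolding a_def using summable_diff[OF sumz sumz] by (simp add: right_diff_distrib)
    have aA: "a j \<ge> - (\<rho>^j)" for j
    proof -
      have "g (B^j * y) - g (B^j * x) \<ge> -1" using gb[of "B^j * y"] gb[of "B^j * x"] by (simp add: abs_le_iff)
      then have "\<rho>^j * (g (B^j * y) - g (B^j * x)) \<ge> \<rho>^j * (-1)" using \<rho> by (intro mult_left_mono) auto
      then show ?thesis unfolding a_def by simp
    qed
    have aB: "a j \<ge> - (q^j * \<delta>)/(1-l)" for j
    proof -
      have "B^j * x \<le> B^j * y" using xy B0 by simp
      from gi[OF this] have "g (B^j * y) - g (B^j * x) \<ge> - (B^j * \<delta>)/(1-l)"
        unfolding \<delta>_def by (simp add: right_diff_distrib)
      then have "\<rho>^j * (g (B^j * y) - g (B^j * x)) \<ge> \<rho>^j * (- (B^j * \<delta>)/(1-l))" using \<rho> by (intro mult_left_mono) auto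
      moreover have "\<rho>^j * (- (B^j * \<delta>)/(1-l)) = - (q^j * \<delta>)/(1-l)"
      proof -
        have e: "\<rho>^j * B^j = q^j" using qrho by (metis power_mult_distrib)
        have "\<rho>^j * (- (B^j * \<delta>)/(1-l)) = - ((\<rho>^j * B^j) * \<delta>)/(1-l)" by (simp add: mult.assoc)
        then show ?thesis unfolding e .
      qed
      ultimately show ?thesis unfolding a_def by linarith
    qed
    have main: "a k = \<rho>^k * u"
    proof -
      define \<theta> where "\<theta> = f - r"
      have r2: "r = real_of_int n / P" unfolding r_def i_real by simp
      have th: "0 \<le> \<theta>" "\<theta> < 1/P"
      proof -
        have "real_of_int n / P \<le> f" using n(2) P0 by (simp add: field_simps)
        then show "0 \<le> \<theta>" unfolding \<theta>_def r2 by simp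
        have "f < (real_of_int n + 1) / P" using n(3) P0 by (simp add: field_simps)
        then show "\<theta> < 1/P" unfolding \<theta>_def r2 by (simp add: add_divide_distrib)
      qed
      have BN0: "0 < B^N" using B0 by simp
      have Bkd: "B^k * \<delta> = u / B^N" unfolding u_def using BN0 B0 by (simp add: field_simps)
      have P3: "1/P = (1/B^3) / B^N" unfolding P_def by (simp add: power_add)
      have B3: "1/B^3 \<le> 1/8"
      proof -
        have "(2::real)^3 \<le> B^3" using B2 by (intro power_mono) auto
        then show ?thesis using B0 by (simp add: divide_simps)
      qed
      have uh: "u < 1/2" using u(2) B2 by (smt (verit) frac_le one_le_numeral zero_less_numeral)
      have small: "\<theta> + B^k * \<delta> < l"
      proof -
        have "\<theta> + B^k * \<delta> < (1/B^3) / B^N + u / B^N" using th P3 Bkd by simp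
        also have "\<dots> = (1/B^3 + u) / B^N" by (simp add: add_divide_distrib)
        also have "\<dots> \<le> 1 / B^N" using B3 uh BN0 by (intro divide_right_mono) auto
        finally show ?thesis unfolding l_def .
      qed
      have ex: "B^k * x - (r + (r + l) - 1) / 2 = of_int \<lfloor>X\<rfloor> + (1-l)/2 + \<theta>"
        unfolding \<theta>_def f_def X_def by (simp add: field_simps)
      have ey: "B^k * y - (r + (r + l) - 1) / 2 = of_int \<lfloor>X\<rfloor> + (1-l)/2 + (\<theta> + B^k * \<delta>)"
        unfolding \<theta>_def f_def X_def \<delta>_def by (simp add: field_simps)
      have Bkd0: "0 \<le> B^k * \<delta>" using B0 \<delta> by simp
      have gx: "g (B^k * x) = \<theta>/l - 1/2" unfolding g_def ex
        using l th(1) small Bkd0 by (intro h_bar_steep) auto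
      have gy: "g (B^k * y) = (\<theta> + B^k * \<delta>)/l - 1/2" unfolding g_def ey
        using l th(1) small Bkd0 by (intro h_bar_steep) auto
      have "g (B^k * y) - g (B^k * x) = (B^k * \<delta>) / l" unfolding gx gy by (simp add: add_divide_distrib)
      also have "\<dots> = u" unfolding Bkd l_def using BN0 B0 by simp
      finally show ?thesis unfolding a_def by simp
    qed
    have split: "suminf a = (\<Sum>t. a (t + K)) + sum a {..<K}"
      using suminf_split_initial_segment[OF suma] .
    have tail: "(\<Sum>t. a (t + K)) \<ge> - (\<rho>^K / (1-\<rho>))"
    proof -
      have sg: "summable (\<lambda>t. \<rho>^t)" using \<rho> by (intro summable_geometric) auto
      have "(\<Sum>t. - (\<rho>^K * \<rho>^t)) \<le> (\<Sum>t. a (t + K))"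
      proof (rule suminf_le)
        show "- (\<rho>^K * \<rho>^t) \<le> a (t + K)" for t using aA[of "t + K"] by (simp add: power_add mult.commute)
        show "summable (\<lambda>t. - (\<rho>^K * \<rho>^t))" using sg by (intro summable_minus summable_mult)
        show "summable (\<lambda>t. a (t + K))" using suma by (rule summable_ignore_initial_segment)
      qed
      moreover have "(\<Sum>t. - (\<rho>^K * \<rho>^t)) = - (\<rho>^K / (1-\<rho>))"
      proof -
        have "(\<Sum>t. - (\<rho>^K * \<rho>^t)) = - (\<Sum>t. \<rho>^K * \<rho>^t)"
          using sg by (intro suminf_minus summable_mult)
        also have "(\<Sum>t. \<rho>^K * \<rho>^t) = \<rho>^K * (\<Sum>t. \<rho>^t)" using sg by (rule suminf_mult)
        also have "(\<Sum>t. \<rho>^t) = 1 / (1 - \<rho>)" using \<rho> by (intro suminf_geometric) auto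
        finally show ?thesis by simp
      qed
      ultimately show ?thesis by simp
    qed
    have fin: "sum a {..<K} = sum a {..<k} + a k + sum a {Suc k..<K}"
    proof -
      have "sum a {0..<k} + sum a {k..<K} = sum a {0..<K}"
        unfolding K_def by (rule sum.atLeastLessThan_concat) auto
      moreover have "sum a {k..<K} = a k + sum a {Suc k..<K}"
        unfolding K_def using T by (intro sum.atLeast_Suc_lessThan) auto
      ultimately show ?thesis by (simp add: lessThan_atLeast0)
    qed
    have ql: "0 < 1 - l" using l by simp
    have s1: "sum a {..<k} \<ge> - (\<delta>/(1-l)) * (q^k/(q-1))"
    proof -
      have "sum a {..<k} \<ge> (\<Sum>j<k. - (q^j * \<delta>)/(1-l))" by (intro sum_mono aB)
      moreover have "(\<Sum>j<k. - (q^j * \<delta>)/(1-l)) = - (\<delta>/(1-l) * (\<Sum>j<k. q^j))"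
        by (simp add: sum_distrib_left sum_negf[symmetric] sum_divide_distrib mult.commute)
      moreover have "(\<Sum>j<k. q^j) = (q^k - 1)/(q - 1)" using q1 by (intro geometric_sum) auto
      moreover have "(q^k - 1)/(q - 1) \<le> q^k/(q-1)" using q1 by (intro divide_right_mono) auto
      then have "\<delta>/(1-l) * ((q^k - 1)/(q - 1)) \<le> \<delta>/(1-l) * (q^k/(q-1))"
        using \<delta> ql by (intro mult_left_mono) auto
      ultimately show ?thesis by simp
    qed
    have s2: "sum a {Suc k..<K} \<ge> - (\<delta>/(1-l)) * (real (T-1) * q^(K-1))"
    proof -
      have "sum a {Suc k..<K} \<ge> (\<Sum>j\<in>{Suc k..<K}. - (q^j * \<delta>)/(1-l))" by (intro sum_mono aB)
      moreover have "(\<Sum>j\<in>{Suc k..<K}. - (q^j * \<delta>)/(1-l)) = - (\<delta>/(1-l) * (\<Sum>j\<in>{Suc k..<K}. q^j))"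
        by (simp add: sum_distrib_left sum_negf[symmetric] sum_divide_distrib mult.commute)
      moreover have "(\<Sum>j\<in>{Suc k..<K}. q^j) \<le> real (card {Suc k..<K}) * q^(K-1)"
        using q1 by (intro sum_bounded_above power_increasing) auto
      moreover have "card {Suc k..<K} = T - 1" unfolding K_def by simp
      ultimately have "(\<Sum>j\<in>{Suc k..<K}. q^j) \<le> real (T - 1) * q^(K-1)" by simp
      then have "\<delta>/(1-l) * (\<Sum>j\<in>{Suc k..<K}. q^j) \<le> \<delta>/(1-l) * (real (T - 1) * q^(K-1))"
        using \<delta> ql by (intro mult_left_mono) auto
      with \<open>sum a {Suc k..<K} \<ge> _\<close> \<open>(\<Sum>j\<in>{Suc k..<K}. - (q^j * \<delta>)/(1-l)) = _\<close>
      show ?thesis by linarith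
    qed
    define M where "M = \<rho>^k * u"
    define c where "c = 1/(1-l)"
    have c: "0 < c" "c \<le> 40/39" unfolding c_def using l by (auto simp: field_simps)
    have BN0: "0 < B^N" using B0 by simp
    have qk: "\<rho>^k * B^k = q^k" using qrho by (metis power_mult_distrib)
    have hM: "M = q^k * B^N * \<delta>" unfolding M_def u_def qk[symmetric] by (simp add: ac_simps)
    have qk0: "0 < q^k" using q1 by simp
    have E1: "\<delta>/(1-l) * (q^k/(q-1)) \<le> c * (M/20)"
    proof -
      have "1/(q-1) \<le> B^N/20" using hN1 q1 by (simp add: field_simps)
      from mult_left_mono[OF this, of "q^k * \<delta>"] qk0 \<delta> have "q^k * \<delta> * (1/(q-1)) \<le> q^k * \<delta> * (B^N/20)" by simp
      from mult_left_mono[OF this, of c] c have "c * (q^k * \<delta> * (1/(q-1))) \<le> c * (q^k * \<delta> * (B^N/20))" by simp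
      then show ?thesis unfolding hM c_def by (simp add: ac_simps)
    qed
    have E2: "\<delta>/(1-l) * (real (T-1) * q^(K-1)) \<le> c * (M/20)"
    proof -
      have qT: "q^(K-1) = q^k * q^(T-1)" unfolding K_def using T by (simp add: power_add[symmetric])
      have T1: "real (T-1) \<le> 2 * C" using T by (simp add: of_nat_diff)
      have "q^(T-1) = q powr real (T-1)" using q1 by (simp add: powr_realpow)
      also have "\<dots> \<le> q powr (2 * C)" using q1 T1 by (intro powr_mono) auto
      also have "\<dots> = B powr (2 * C * (1 - \<alpha>))" unfolding q_def by (simp add: powr_powr mult.commute)
      finally have "q^(T-1) \<le> B powr (2 * C * (1 - \<alpha>))" .
      then have "real (T-1) * q^(T-1) \<le> (2 * C) * B powr (2 * C * (1 - \<alpha>))"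
        using T1 q1 by (intro mult_mono) auto
      also have "\<dots> \<le> B^N/20" using hN2 by simp
      finally have "real (T-1) * q^(T-1) \<le> B^N/20" .
      from mult_left_mono[OF this, of "q^k * \<delta>"] qk0 \<delta> have "q^k * \<delta> * (real (T-1) * q^(T-1)) \<le> q^k * \<delta> * (B^N/20)" by simp
      from mult_left_mono[OF this, of c] c have "c * (q^k * \<delta> * (real (T-1) * q^(T-1))) \<le> c * (q^k * \<delta> * (B^N/20))" by simp
      then show ?thesis unfolding hM c_def qT by (simp add: ac_simps)
    qed
    have E3: "\<rho>^K/(1-\<rho>) \<le> M * (1/8)"
    proof -
      have aC: "\<alpha> * C = 10/3 * log 2 10 - log 2 w + 2 - \<alpha>" unfolding C_def w_def using halpha by (simp add: field_simps)
      have ex_le: "2 - 2*(\<alpha>*C) \<le> -20 + log 2 w" using aC log10 logw halpha by linarith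
      have ex_le0: "2 - 2*(\<alpha>*C) \<le> 0" using ex_le logw by linarith
      have "\<rho>^T = B powr (-\<alpha> * real T)" unfolding \<rho>_def using B0(1) by (rule pow_powr)
      also have "\<dots> \<le> B powr (-(2*(\<alpha>*C)))" using B0 T halpha by (intro powr_mono) auto
      finally have rT: "\<rho>^T \<le> B powr (-(2*(\<alpha>*C)))" .
      have "B^2 * \<rho>^T \<le> B^2 * B powr (-(2*(\<alpha>*C)))" using rT by (intro mult_left_mono) auto
      also have "\<dots> = B powr (2 - 2*(\<alpha>*C))"
      proof -
        have "B^2 = B powr 2" using B0 by (simp add: powr_numeral)
        then show ?thesis by (simp add: powr_add[symmetric])
      qed
      also have "\<dots> \<le> 2 powr (2 - 2*(\<alpha>*C))" using ex_le0 B2 by (intro powr_mono2') auto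
      also have "\<dots> \<le> 2 powr (-20 + log 2 w)" using ex_le by (intro powr_mono) auto
      also have "\<dots> = 2 powr (-20) * w" by (subst powr_add) (use w in simp)
      also have "\<dots> \<le> (1/8) * (1 - \<rho>)"
      proof -
        have "(2::real) powr (-20) \<le> 2 powr (-3)" by (intro powr_mono) auto
        also have "(2::real) powr (-3) = 1/8" by (simp add: powr_neg_numeral)
        finally have "(2::real) powr (-20) \<le> 1/8" .
        then show ?thesis using w wrho by (intro mult_mono) auto
      qed
      finally have h1: "B^2 * \<rho>^T \<le> (1/8) * (1 - \<rho>)" .
      have "\<rho>^K/(1-\<rho>) = \<rho>^k * (\<rho>^T/(1-\<rho>))" unfolding K_def by (simp add: power_add)
      also have "\<dots> \<le> \<rho>^k * ((1/8) * (1/B^2))"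
      proof (intro mult_left_mono)
        show "\<rho>^T/(1-\<rho>) \<le> (1/8) * (1/B^2)" using h1 \<rho> B0 by (simp add: field_simps)
      qed (use \<rho> in simp)
      also have "\<dots> \<le> \<rho>^k * ((1/8) * u)" using u \<rho> by (intro mult_left_mono) auto
      finally show ?thesis unfolding M_def by (simp add: ac_simps)
    qed
    have M0: "0 \<le> M" unfolding M_def using \<rho> u B0 by (intro mult_nonneg_nonneg) (auto intro: order_trans[of _ "1/B^2"])
    have total: "suminf a \<ge> M - c*(M/20) - c*(M/20) - M*(1/8)"
      using split tail fin s1 s2 E1 E2 E3 main unfolding M_def by linarith
    have cM: "c * M \<le> 40/39 * M" using c M0 by (intro mult_right_mono) auto
    have S7: "suminf a \<ge> 7/10 * M" using total cM M0 by linarith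
    have Mge: "B powr (\<alpha> * real N - 2 * (1 - \<alpha>)) * \<delta> powr \<alpha> \<le> M"
    proof -
      have u0: "0 < u" using u B0 by (smt (verit) divide_pos_pos zero_less_power)
      have uB: "u = B^(N+k) * \<delta>" unfolding u_def by (simp add: power_add ac_simps)
      have pu: "u powr (1-\<alpha>) = B powr (real (N+k) * (1-\<alpha>)) * \<delta> powr (1-\<alpha>)"
      proof -
        have "B^(N+k) = B powr real (N+k)" using powr_realpow[OF B0(1), of "N+k"] by simp
        then have "u powr (1-\<alpha>) = (B powr real (N+k)) powr (1-\<alpha>) * \<delta> powr (1-\<alpha>)"
          unfolding uB using B0 \<delta> by (simp add: powr_mult)
        then show ?thesis by (simp add: powr_powr)
      qed
      have lowu: "B powr (-2*(1-\<alpha>)) \<le> u powr (1-\<alpha>)"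
      proof -
        have "(1/B^2) powr (1-\<alpha>) \<le> u powr (1-\<alpha>)" using u halpha B0 by (intro powr_mono2) auto
        moreover have "1/B^2 = B powr (-2)" using B0 by (simp add: powr_neg_numeral)
        ultimately show ?thesis by (simp add: powr_powr)
      qed
      have Mid: "M = u powr (1-\<alpha>) * B powr (\<alpha> * real N) * \<delta> powr \<alpha>"
      proof -
        have "q^k = B powr ((1-\<alpha>) * real k)" unfolding q_def using B0(1) by (rule pow_powr)
        moreover have "B^N = B powr real N" using powr_realpow[OF B0(1), of N] by simp
        moreover have "\<delta> = \<delta> powr (1-\<alpha>) * \<delta> powr \<alpha>"
          using \<delta> by (simp add: powr_add[symmetric])
        ultimately have "M = B powr ((1-\<alpha>) * real k) * B powr real N * (\<delta> powr (1-\<alpha>) * \<delta> powr \<alpha>)"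
          unfolding hM by metis
        also have "\<dots> = B powr ((1-\<alpha>) * real k + real N) * \<delta> powr (1-\<alpha>) * \<delta> powr \<alpha>"
          by (simp add: powr_add)
        also have "(1-\<alpha>) * real k + real N = real (N+k) * (1-\<alpha>) + \<alpha> * real N"
          by (simp add: algebra_simps)
        also have "B powr (real (N+k) * (1-\<alpha>) + \<alpha> * real N) * \<delta> powr (1-\<alpha>) * \<delta> powr \<alpha>
            = u powr (1-\<alpha>) * B powr (\<alpha> * real N) * \<delta> powr \<alpha>"
          unfolding pu by (simp add: powr_add)
        finally show ?thesis .
      qed
      have "B powr (\<alpha> * real N - 2 * (1 - \<alpha>)) * \<delta> powr \<alpha> = B powr (-2*(1-\<alpha>)) * B powr (\<alpha> * real N) * \<delta> powr \<alpha>"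
        by (subst powr_add[symmetric]) (simp add: algebra_simps)
      also have "\<dots> \<le> u powr (1-\<alpha>) * B powr (\<alpha> * real N) * \<delta> powr \<alpha>"
        using lowu by (intro mult_right_mono) auto
      finally show ?thesis unfolding Mid .
    qed
    show ?thesis unfolding Wd using S7 Mge by linarith
  qed
  show "\<exists>i \<in> {0..<b ^ (l0 + 3)}.
       let l = real b powr (- real l0);
           r = real i * real b powr (- real l0 - 3);
           s = r + l;
           g = (\<lambda>t. h_bar l (t - (r + s - 1) / 2))
       in W_fun \<alpha> b g y - W_fun \<alpha> b g x
            \<ge> 7 / 10 * real b powr (\<alpha> * real l0 - 2 * (1 - \<alpha>)) * (y - x) powr \<alpha>"
  proof (rule bexI[of _ i])
    show "i \<in> {0..<b ^ (l0 + 3)}" using i_lt by simp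
    show "let l = real b powr (- real l0);
           r = real i * real b powr (- real l0 - 3);
           s = r + l;
           g = (\<lambda>t. h_bar l (t - (r + s - 1) / 2))
       in W_fun \<alpha> b g y - W_fun \<alpha> b g x
            \<ge> 7 / 10 * real b powr (\<alpha> * real l0 - 2 * (1 - \<alpha>)) * (y - x) powr \<alpha>"
      unfolding Let_def l_eq r_eq using key by (simp only: g_def r_def B_def N_def \<delta>_def)
  qed
qed

end
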